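(* For every $h>2/3$ there is an instance with two groups in which all agents have binary valuations and no allocation is $h$-democratic positive-MMS-fair.
   Context: There is a finite set $G$ of goods and $k$ groups $A_1,\dots,A_k$ of agents ($n_i\ge1$ agents in $A_i$); here $k=2$. An agent $a$ is binary if her utility is additive, $u_a(X)=\sum_{g\in X}u_a(\{g\})$, with $u_a(\{g\})\in\{0,1\}$. An allocation is a partition $(G_1,\dots,G_k)$ of $G$; every agent of $A_i$ gets utility $u_a(G_i)$. $\mathrm{MMS}^k_a(G)$ is the maximum over partitions of $G$ into $k$ sets of the minimum utility of $a$ for a set of the partition. The allocation is positive-MMS-fair for $a\in A_i$ if $\mathrm{MMS}^k_a(G)>0$ implies $u_a(G_i)>0$. For $h\in[0,1]$, an allocation is $h$-democratic fair (for a given individual fairness notion) if for every $i$, at least $h\cdot n_i$ agents of $A_i$ find it fair. *)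

theory Defs
  imports Main Complex_Main
begin

definition util :: "(nat \<Rightarrow> nat) \<Rightarrow> nat set \<Rightarrow> nat" where
  "util w X = (\<Sum>g\<in>X. w g)"

definition binary_val :: "nat set \<Rightarrow> (nat \<Rightarrow> nat) \<Rightarrow> bool" where
  "binary_val G w \<longleftrightarrow> (\<forall>g\<in>G. w g \<in> {0, 1})"

(* P is a partition of G into k (possibly empty) bundles P 0, ..., P (k-1) *)
definition is_partition :: "nat \<Rightarrow> nat set \<Rightarrow> (nat \<Rightarrow> nat set) \<Rightarrow> bool" where
  "is_partition k G P \<longleftrightarrow>
     (\<Union>i<k. P i) = G \<and> (\<forall>i<k. \<forall>j<k. i \<noteq> j \<longrightarrow> P i \<inter> P j = {})"

definition mms :: "nat \<Rightarrow> (nat \<Rightarrow> nat) \<Rightarrow> nat set \<Rightarrow> nat" where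
  "mms k w G = Max {Min ((\<lambda>i. util w (P i)) ` {..<k}) | P. is_partition k G P}"

definition pos_mms_fair :: "nat \<Rightarrow> (nat \<Rightarrow> nat) \<Rightarrow> nat set \<Rightarrow> nat set \<Rightarrow> bool" where
  "pos_mms_fair k w G B \<longleftrightarrow> (mms k w G > 0 \<longrightarrow> util w B > 0)"

(* k groups; group i has agents 0..<n i, agent j of group i has valuation v i j. *)
definition h_dem_pos_mms_fair ::
  "real \<Rightarrow> nat \<Rightarrow> nat set \<Rightarrow> (nat \<Rightarrow> nat) \<Rightarrow> (nat \<Rightarrow> nat \<Rightarrow> nat \<Rightarrow> nat)
     \<Rightarrow> (nat \<Rightarrow> nat set) \<Rightarrow> bool" where
  "h_dem_pos_mms_fair h k G n v P \<longleftrightarrow>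
     (\<forall>i<k. h * real (n i) \<le> real (card {j. j < n i \<and> pos_mms_fair k (v i j) G (P i)}))"

end

theory Submission
  imports Defs
begin

lemma util_pos: "finite X \<Longrightarrow> (util w X > 0) = (\<exists>g\<in>X. w g > 0)"
  unfolding util_def by (metis not_gr0 sum_eq_0_iff)

lemma mms_pos:
  assumes "finite G" "is_partition 2 G P" "util w (P 0) > 0" "util w (P 1) > 0"
    "\<forall>g\<in>G. w g \<le> 1"
  shows "mms 2 w G > 0"
proof -
  let ?S = "{Min ((\<lambda>i. util w (P i)) ` {..<2}) | P. is_partition 2 G P}"
  have le: "util w X \<le> util w G" if "X \<subseteq> G" for X
    unfolding util_def using assms(1) that by (intro sum_mono2) auto
  have sub: "?S \<subseteq> {..util w G}"
  proof
    fix x assume "x \<in> ?S"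
    then obtain Q where x: "x = Min ((\<lambda>i. util w (Q i)) ` {..<2})" and q: "is_partition 2 G Q" by blast
    have "Q 0 \<subseteq> G" using q unfolding is_partition_def by auto
    hence "util w (Q 0) \<le> util w G" by (rule le)
    moreover have "x \<le> util w (Q 0)" unfolding x by (rule Min_le) auto
    ultimately show "x \<in> {..util w G}" by simp
  qed
  hence fin: "finite ?S" by (rule finite_subset) simp
  have "Min ((\<lambda>i. util w (P i)) ` {..<2}) \<in> ?S" using assms(2) by blast
  moreover have "Min ((\<lambda>i. util w (P i)) ` {..<2}) > 0"
  proof -
    have "{..<2::nat} = {0,1}" by auto
    thus ?thesis using assms(3,4) by simp
  qed
  ultimately have "Max ?S > 0" using fin by (meson Max_ge less_le_trans)
  thus ?thesis unfolding mms_def .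
qed

theorem mainTheorem3:
  fixes h :: real
  assumes "2/3 < h" and "h \<le> 1"
  shows "\<exists>(G::nat set) (n::nat \<Rightarrow> nat) (v::nat \<Rightarrow> nat \<Rightarrow> nat \<Rightarrow> nat).
           finite G \<and> (\<forall>i<2. 1 \<le> n i) \<and>
           (\<forall>i<2. \<forall>j<n i. binary_val G (v i j)) \<and>
           \<not> (\<exists>P. is_partition 2 G P \<and> h_dem_pos_mms_fair h 2 G n v P)"
proof -
  define G :: "nat set" where "G = {0,1,2}"
  define v :: "nat \<Rightarrow> nat \<Rightarrow> nat \<Rightarrow> nat" where "v = (\<lambda>i j g. if g < 3 \<and> g \<noteq> j then 1 else 0)"
  define n :: "nat \<Rightarrow> nat" where "n = (\<lambda>_. 3)"
  have mpos: "mms 2 (v i j) G > 0" if "j < 3" for i j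
  proof -
    have bnd: "\<forall>g\<in>G. v i j g \<le> 1" unfolding v_def by auto
    have c: "j = 0 \<or> j = 1 \<or> j = 2" using that by auto
    define P :: "nat \<Rightarrow> nat set" where
      "P = (\<lambda>k. if k = 0 then (if j = 0 then {0,1} else {0}) else (if j = 0 then {2} else {1,2}))"
    have e: "{..<2::nat} = {0,1}" by auto
    have "is_partition 2 G P" unfolding is_partition_def P_def G_def e
      by auto
    moreover have "util (v i j) (P 0) > 0" "util (v i j) (P 1) > 0"
      using c by (auto simp: util_def P_def v_def)
    ultimately show ?thesis using mms_pos[OF _ _ _ _ bnd] by (simp add: G_def)
  qed
  have "\<not> (\<exists>P. is_partition 2 G P \<and> h_dem_pos_mms_fair h 2 G n v P)"
  proof
    assume "\<exists>P. is_partition 2 G P \<and> h_dem_pos_mms_fair h 2 G n v P"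
    then obtain P where p: "is_partition 2 G P" and f: "h_dem_pos_mms_fair h 2 G n v P" by blast
    have sub: "P i \<subseteq> G" if "i < 2" for i using p that unfolding is_partition_def by auto
    have all: "\<forall>j<3. util (v i j) (P i) > 0" if "i < 2" for i
    proof -
      let ?A = "{j. j < n i \<and> pos_mms_fair 2 (v i j) G (P i)}"
      have "h * 3 \<le> real (card ?A)" using f that unfolding h_dem_pos_mms_fair_def n_def by auto
      hence "card ?A > 2" using assms(1) by linarith
      moreover have "?A \<subseteq> {..<3}" unfolding n_def by auto
      ultimately have "?A = {..<3}"
      proof -
        assume a: "card ?A > 2" "?A \<subseteq> {..<3}"
        have "card ?A \<le> 3" using card_mono[OF _ a(2)] by simp
        hence "card ?A = card {..<3::nat}" using a(1) by simp
        thus ?thesis using card_subset_eq[OF _ a(2)] by simp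
      qed
      thus ?thesis using mpos unfolding pos_mms_fair_def by (auto simp: n_def)
    qed
    have fin: "finite (P i)" if "i < 2" for i using sub[OF that] unfolding G_def by (rule finite_subset) simp
    have cond: "(1 \<in> P i \<or> 2 \<in> P i) \<and> (0 \<in> P i \<or> 2 \<in> P i) \<and> (0 \<in> P i \<or> 1 \<in> P i)" if "i < 2" for i
    proof -
      have "\<exists>g\<in>P i. v i j g > 0" if "j < 3" for j using all[OF \<open>i<2\<close>] that util_pos[OF fin[OF \<open>i<2\<close>]] by auto
      from this[of 0] this[of 1] this[of 2] show ?thesis unfolding v_def
        using sub[OF that] unfolding G_def by (auto split: if_splits)
    qed
    have "P 0 \<inter> P 1 = {}" using p unfolding is_partition_def by auto
    thus False using cond[of 0] cond[of 1] by auto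
  qed
  moreover have "\<forall>i<2. \<forall>j<n i. binary_val G (v i j)" unfolding binary_val_def v_def by auto
  ultimately show ?thesis unfolding n_def G_def by (intro exI[of _ G] exI[of _ n] exI[of _ v]) (auto simp: G_def n_def)
qed

end
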